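(* Let $P^{(1)},\dots,P^{(m)}\in\{I,X,Y,Z\}^n$ be phase-free Pauli strings. Consider the certification procedure: maintain a dictionary $D$ from labeled patterns $(A,a)$ (with $A\subseteq\{1,\dots,n\}$, $a:A\to\{X,Y,Z\}$) to integers, initially zero, and a counter $N=0$. For $i=1,\dots,m$: with $P=P^{(i)}$ compute $c=(N-Z)/2$ where $Z=\sum_{A\subseteq\operatorname{supp}(P)}(-2)^{|A|}\sum_{a\in\mathcal{L}_P(A)}D[(A,a)]$ and $\mathcal{L}_P(A)=\{a:A\to\{X,Y,Z\}: a(j)\neq P_j\ \forall j\in A\}$; if $c>0$, scan $j=1,\dots,i-1$, testing whether $|\operatorname{conf}(P^{(j)},P^{(i)})|$ is odd, and return the first pair $(j,i)$ for which it is; otherwise increment $D[(A,P^{(i)}|_A)]$ by one for every $A\subseteq\operatorname{supp}(P^{(i)})$ and set $N\leftarrow N+1$. If the loop finishes, return ``all commute''. Then this procedure returns ``all commute'' if and only if all the input strings pairwise commute, and if it returns a pair $(j,i)$, then $P^{(j)}P^{(i)}=-P^{(i)}P^{(j)}$.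
   Context: A phase-free $n$-qubit Pauli string is a word $P=(P_1,\dots,P_n)\in\{I,X,Y,Z\}^n$ with $I,X,Y,Z$ the identity and the three Pauli matrices, identified with $P_1\otimes\cdots\otimes P_n$. Its support is $\operatorname{supp}(P)=\{j: P_j\neq I\}$. The conflict set of $P,Q$ is $\operatorname{conf}(P,Q)=\{j: P_j\neq I,\ Q_j\neq I,\ P_j\neq Q_j\}$; two Pauli strings anticommute exactly when their conflict set has odd size and commute otherwise. *)

theory Defs
  imports Complex_Main
begin

datatype pauli = PI | PX | PY | PZ

(* A phase-free Pauli string is a list of single-qubit Paulis; position j (0-based)
   corresponds to qubit j+1 of the paper. *)
type_synonym pstring = "pauli list"

definition supp :: "pstring \<Rightarrow> nat set" where
  "supp P = {j. j < length P \<and> P ! j \<noteq> PI}"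

definition conf :: "pstring \<Rightarrow> pstring \<Rightarrow> nat set" where
  "conf P Q = {j. j < length P \<and> j < length Q \<and> P ! j \<noteq> PI \<and> Q ! j \<noteq> PI \<and> P ! j \<noteq> Q ! j}"

(* Action of the operators on a state vector of C^(2^n), given as its coefficient
   function on computational basis states x :: nat \<Rightarrow> bool (bit j = qubit j). *)
fun act1 :: "pauli \<Rightarrow> nat \<Rightarrow> ((nat \<Rightarrow> bool) \<Rightarrow> complex) \<Rightarrow> ((nat \<Rightarrow> bool) \<Rightarrow> complex)" where
  "act1 PI j f = f"
| "act1 PX j f = (\<lambda>x. f (x(j := \<not> x j)))"
| "act1 PY j f = (\<lambda>x. (if x j then \<i> else - \<i>) * f (x(j := \<not> x j)))"
| "act1 PZ j f = (\<lambda>x. (if x j then -1 else 1) * f x)"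

definition act :: "pstring \<Rightarrow> ((nat \<Rightarrow> bool) \<Rightarrow> complex) \<Rightarrow> ((nat \<Rightarrow> bool) \<Rightarrow> complex)" where
  "act P = fold (\<lambda>j g. act1 (P ! j) j g) [0..<length P]"

definition pauli_commute :: "pstring \<Rightarrow> pstring \<Rightarrow> bool" where
  "pauli_commute P Q \<longleftrightarrow> (\<forall>f. act P (act Q f) = act Q (act P f))"

definition pauli_anticommute :: "pstring \<Rightarrow> pstring \<Rightarrow> bool" where
  "pauli_anticommute P Q \<longleftrightarrow> (\<forall>f. act P (act Q f) = - act Q (act P f))"

(* labeled patterns (A, a): a is a map A \<rightarrow> {X,Y,Z}, stored as a total function
   that equals PI outside A (canonical representative) *)
type_synonym pattern = "nat set \<times> (nat \<Rightarrow> pauli)"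
type_synonym dict = "pattern \<Rightarrow> int"

definition restr :: "pstring \<Rightarrow> nat set \<Rightarrow> (nat \<Rightarrow> pauli)" where
  "restr P A = (\<lambda>j. if j \<in> A then P ! j else PI)"

definition labels :: "pstring \<Rightarrow> nat set \<Rightarrow> (nat \<Rightarrow> pauli) set" where
  "labels P A = {a. (\<forall>j\<in>A. a j \<noteq> PI \<and> a j \<noteq> P ! j) \<and> (\<forall>j. j \<notin> A \<longrightarrow> a j = PI)}"

definition Zval :: "dict \<Rightarrow> pstring \<Rightarrow> int" where
  "Zval D P = (\<Sum>A\<in>Pow (supp P). (-2) ^ card A * (\<Sum>a\<in>labels P A. D (A, a)))"

definition dict_update :: "dict \<Rightarrow> pstring \<Rightarrow> dict" where
  "dict_update D P = (\<lambda>(A, a). D (A, a) + (if A \<subseteq> supp P \<and> a = restr P A then 1 else 0))"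

datatype result = AllCommute | Found nat nat | ScanFailed

(* Reported indices are 1-based as in the paper. ScanFailed models the (unspecified)
   case that c > 0 but the scan finds no anticommuting partner. *)
fun run :: "pstring list \<Rightarrow> pstring list \<Rightarrow> dict \<Rightarrow> int \<Rightarrow> result" where
  "run prev [] D N = AllCommute"
| "run prev (P # rest) D N =
     (let i = length prev + 1;
          c = real_of_int (N - Zval D P) / 2
      in if c > 0 then
           (case find (\<lambda>j. odd (card (conf (prev ! (j - 1)) P))) [1..<i] of
              Some j \<Rightarrow> Found j i
            | None \<Rightarrow> ScanFailed)
         else run (prev @ [P]) rest (dict_update D P) (N + 1))"

definition certify :: "pstring list \<Rightarrow> result" where
  "certify Ps = run [] Ps (\<lambda>_. 0) 0"

end

theory Submission
  imports Defs
begin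

definition sg :: "pauli \<Rightarrow> pauli \<Rightarrow> complex" where
  "sg p q = (if p \<noteq> PI \<and> q \<noteq> PI \<and> p \<noteq> q then -1 else 1)"

lemma act1_comm:
  assumes "j \<noteq> k"
  shows "act1 p j (act1 q k f) = act1 q k (act1 p j f)"
  using assms by (cases p; cases q) (auto simp: fun_eq_iff fun_upd_twist)

lemma act1_smul: "act1 p j (\<lambda>x. c * g x) = (\<lambda>x. c * act1 p j g x)"
  by (cases p) (auto simp: fun_eq_iff algebra_simps)

lemma act1_same: "act1 p j (act1 q j f) = (\<lambda>x. sg p q * act1 q j (act1 p j f) x)"
  by (cases p; cases q) (auto simp: fun_eq_iff sg_def)

lemma act1_invol: "act1 p j (act1 p j f) = f"
  by (cases p) (auto simp: fun_eq_iff)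

definition actL :: "(nat \<Rightarrow> pauli) \<Rightarrow> nat list \<Rightarrow> ((nat \<Rightarrow> bool) \<Rightarrow> complex) \<Rightarrow> ((nat \<Rightarrow> bool) \<Rightarrow> complex)" where
  "actL p js = fold (\<lambda>j g. act1 (p j) j g) js"

lemma actL_Cons: "actL p (j # js) g = actL p js (act1 (p j) j g)"
  by (simp add: actL_def)

lemma act_actL: "act P = actL (\<lambda>j. P ! j) [0..<length P]"
  by (simp add: act_def actL_def)

lemma act1_actL: "j \<notin> set js \<Longrightarrow> act1 p j (actL q js f) = actL q js (act1 p j f)"
proof (induction js arbitrary: f)
  case Nil then show ?case by (simp add: actL_def)
next
  case (Cons k js) then show ?case by (simp add: actL_Cons act1_comm)
qed

lemma actL_smul: "actL p js (\<lambda>x. c * g x) = (\<lambda>x. c * actL p js g x)"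
  by (induction js arbitrary: g) (simp_all add: actL_Cons act1_smul actL_def)

lemma actL_main:
  "distinct js \<Longrightarrow> actL p js (actL q js f) =
     (\<lambda>x. (\<Prod>j\<leftarrow>js. sg (p j) (q j)) * actL q js (actL p js f) x)"
proof (induction js arbitrary: f)
  case Nil then show ?case by (simp add: actL_def)
next
  case (Cons j js)
  let ?S = "\<Prod>j\<leftarrow>js. sg (p j) (q j)"
  have "actL p (j # js) (actL q (j # js) f) = actL p js (act1 (p j) j (actL q js (act1 (q j) j f)))"
    by (simp add: actL_Cons)
  also have "\<dots> = actL p js (actL q js (act1 (p j) j (act1 (q j) j f)))"
    using Cons by (simp add: act1_actL)
  also have "\<dots> = (\<lambda>x. sg (p j) (q j) * actL p js (actL q js (act1 (q j) j (act1 (p j) j f))) x)"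
    by (simp only: act1_same[of "p j" j "q j" f] actL_smul)
  also have "\<dots> = (\<lambda>x. sg (p j) (q j) * (?S * actL q js (actL p js (act1 (q j) j (act1 (p j) j f))) x))"
    using Cons by simp
  also have "\<dots> = (\<lambda>x. (sg (p j) (q j) * ?S) * actL q (j # js) (actL p (j # js) f) x)"
    using Cons by (simp add: actL_Cons act1_actL mult.assoc)
  finally show ?case by simp
qed

lemma actL_zero: "actL p js g = (\<lambda>_. 0) \<Longrightarrow> g = (\<lambda>_. 0)"
proof (induction js arbitrary: g)
  case Nil then show ?case by (simp add: actL_def)
next
  case (Cons j js)
  then have h: "act1 (p j) j g = (\<lambda>_. 0)" by (simp add: actL_Cons)
  have "g = act1 (p j) j (act1 (p j) j g)" by (simp add: act1_invol)
  also have "\<dots> = act1 (p j) j (\<lambda>x. 0 * g x)" using h by simp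
  also have "\<dots> = (\<lambda>_. 0)" by (simp only: act1_smul) simp
  finally show ?case .
qed

lemma sign_conf:
  assumes "length P = n" "length Q = n"
  shows "(\<Prod>j\<leftarrow>[0..<n]. sg (P ! j) (Q ! j)) = (-1) ^ card (conf P Q)"
proof -
  have "(\<Prod>j\<leftarrow>[0..<n]. sg (P ! j) (Q ! j)) = (\<Prod>j\<in>{0..<n}. sg (P ! j) (Q ! j))"
    by (simp add: prod.distinct_set_conv_list[symmetric])
  also have "\<dots> = (\<Prod>j\<in>{0..<n}. if j \<in> conf P Q then -1 else 1)"
    using assms by (intro prod.cong) (auto simp: sg_def conf_def)
  also have "\<dots> = (-1) ^ card ({0..<n} \<inter> conf P Q)"
    by (simp add: prod.If_cases)
  also have "{0..<n} \<inter> conf P Q = conf P Q" using assms by (auto simp: conf_def)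
  finally show ?thesis .
qed

lemma act_comm_sign:
  assumes "length P = n" "length Q = n"
  shows "act P (act Q f) = (\<lambda>x. (-1) ^ card (conf P Q) * act Q (act P f) x)"
  using actL_main[of "[0..<n]" "\<lambda>j. P ! j" "\<lambda>j. Q ! j" f] sign_conf[OF assms] assms
  by (simp add: act_actL)

lemma act_zero: "act P g = (\<lambda>_. 0) \<Longrightarrow> g = (\<lambda>_. 0)"
  by (simp add: act_actL actL_zero)

lemma commute_iff:
  assumes "length P = n" "length Q = n"
  shows "pauli_commute P Q \<longleftrightarrow> even (card (conf P Q))"
proof
  assume c: "pauli_commute P Q"
  show "even (card (conf P Q))"
  proof (rule ccontr)
    assume "odd (card (conf P Q))"
    then have e: "act P (act Q (\<lambda>_. 1)) = (\<lambda>x. - act Q (act P (\<lambda>_. 1)) x)"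
      using act_comm_sign[OF assms] by simp
    from c have "act P (act Q (\<lambda>_. 1)) = act Q (act P (\<lambda>_. 1))"
      by (simp add: pauli_commute_def)
    with e have "act Q (act P (\<lambda>_. 1)) = (\<lambda>_. 0)" by (auto simp: fun_eq_iff)
    then have "act P (\<lambda>_. 1) = (\<lambda>_. 0)" by (rule act_zero)
    then have "(\<lambda>_::nat\<Rightarrow>bool. 1::complex) = (\<lambda>_. 0)" by (rule act_zero)
    then show False by (simp add: fun_eq_iff)
  qed
next
  assume "even (card (conf P Q))"
  then show "pauli_commute P Q"
    using act_comm_sign[OF assms] by (simp add: pauli_commute_def)
qed

lemma anticommute_if:
  assumes "length P = n" "length Q = n" "odd (card (conf P Q))"
  shows "pauli_anticommute P Q"
  using act_comm_sign[OF assms(1,2)] assms(3)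
  by (simp add: pauli_anticommute_def fun_eq_iff)


definition dictOf :: "pstring list \<Rightarrow> dict" where
  "dictOf prev = (\<lambda>(A, a). (\<Sum>Q\<leftarrow>prev. if A \<subseteq> supp Q \<and> a = restr Q A then 1 else 0))"

lemma dict_upd: "dict_update (dictOf prev) P = dictOf (prev @ [P])"
  by (auto simp: fun_eq_iff dict_update_def dictOf_def)

lemma finite_pauli: "finite (UNIV :: pauli set)"
proof -
  have e: "UNIV = {PI, PX, PY, PZ}" by (auto intro: pauli.exhaust)
  have "finite {PI, PX, PY, PZ}" by simp
  then show ?thesis using e by metis
qed

lemma finite_labels: "finite A \<Longrightarrow> finite (labels P A)"
proof -
  assume A: "finite A"
  have "labels P A \<subseteq> {f. \<forall>x. (x \<in> A \<longrightarrow> f x \<in> UNIV) \<and> (x \<notin> A \<longrightarrow> f x = PI)}"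
    by (auto simp: labels_def)
  moreover have "finite {f. \<forall>x. (x \<in> A \<longrightarrow> f x \<in> (UNIV::pauli set)) \<and> (x \<notin> A \<longrightarrow> f x = PI)}"
    by (rule finite_set_of_finite_funs[OF A finite_pauli])
  ultimately show ?thesis by (rule finite_subset)
qed

lemma finite_supp: "finite (supp P)"
  by (auto simp: supp_def)

lemma conf_sym: "conf P Q = conf Q P"
  by (auto simp: conf_def)

lemma conf_self: "conf P P = {}"
  by (auto simp: conf_def)

lemma key_equiv:
  assumes "A \<subseteq> supp P" "length P = length Q"
  shows "(A \<subseteq> supp Q \<and> restr Q A \<in> labels P A) \<longleftrightarrow> A \<subseteq> conf P Q"
  using assms by (auto simp: supp_def restr_def labels_def conf_def)

lemma single:
  assumes "length P = length Q"
  shows "(\<Sum>A\<in>Pow (supp P). (-2) ^ card A *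
            (\<Sum>a\<in>labels P A. if A \<subseteq> supp Q \<and> a = restr Q A then 1 else 0)) = ((-1) ^ card (conf P Q) :: int)"
proof -
  have fc: "finite (conf P Q)" by (auto simp: conf_def)
  have "(\<Sum>A\<in>Pow (supp P). (-2) ^ card A *
            (\<Sum>a\<in>labels P A. if A \<subseteq> supp Q \<and> a = restr Q A then 1 else 0))
      = (\<Sum>A\<in>Pow (supp P). if A \<subseteq> conf P Q then (-2) ^ card A else (0::int))"
  proof (rule sum.cong[OF refl])
    fix A assume A: "A \<in> Pow (supp P)"
    then have fA: "finite A" using finite_supp finite_subset by blast
    have "(\<Sum>a\<in>labels P A. if A \<subseteq> supp Q \<and> a = restr Q A then 1 else 0)
        = (if A \<subseteq> supp Q \<and> restr Q A \<in> labels P A then 1 else (0::int))"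
      using finite_labels[OF fA, of P] by (cases "A \<subseteq> supp Q") (simp_all add: sum.delta')
    then show "(-2::int) ^ card A * (\<Sum>a\<in>labels P A. if A \<subseteq> supp Q \<and> a = restr Q A then 1 else 0)
        = (if A \<subseteq> conf P Q then (-2) ^ card A else 0)"
      using key_equiv[of A P Q] A assms by simp
  qed
  also have "\<dots> = (\<Sum>A\<in>{A \<in> Pow (supp P). A \<subseteq> conf P Q}. (-2) ^ card A)"
    by (rule sum.inter_filter[symmetric]) (simp add: finite_supp)
  also have "{A \<in> Pow (supp P). A \<subseteq> conf P Q} = Pow (conf P Q)"
    by (auto simp: conf_def supp_def)
  also have "(\<Sum>A\<in>Pow (conf P Q). (-2) ^ card A) = (\<Sum>A\<in>Pow (conf P Q). (\<Prod>x\<in>A. (-2::int)) * (\<Prod>x\<in>conf P Q - A. 1))"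
    by simp
  also have "\<dots> = (\<Prod>x\<in>conf P Q. (-2) + 1)"
    by (rule prod_add[OF fc, symmetric])
  finally show ?thesis by simp
qed

lemma Zval_dictOf:
  assumes "\<forall>Q\<in>set prev. length Q = length P"
  shows "Zval (dictOf prev) P = (\<Sum>Q\<leftarrow>prev. (-1) ^ card (conf P Q))"
  using assms
proof (induction prev)
  case Nil then show ?case by (simp add: Zval_def dictOf_def)
next
  case (Cons Q prev)
  have "Zval (dictOf (Q # prev)) P =
     (\<Sum>A\<in>Pow (supp P). (-2) ^ card A *
            (\<Sum>a\<in>labels P A. if A \<subseteq> supp Q \<and> a = restr Q A then 1 else 0)) + Zval (dictOf prev) P"
    by (simp add: Zval_def dictOf_def sum.distrib distrib_left)
  also have "\<dots> = (-1) ^ card (conf P Q) + Zval (dictOf prev) P"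
    using single[of P Q] Cons.prems by simp
  finally show ?case using Cons by simp
qed

lemma count_pos:
  "(int (length prev) - (\<Sum>Q\<leftarrow>prev. (-1) ^ card (conf P Q)) \<ge> (0::int)) \<and>
   ((int (length prev) - (\<Sum>Q\<leftarrow>prev. (-1) ^ card (conf P Q)) > (0::int)) \<longleftrightarrow>
      (\<exists>Q\<in>set prev. odd (card (conf P Q))))"
proof (induction prev)
  case Nil then show ?case by simp
next
  case (Cons Q prev)
  then show ?case
    by (cases "even (card (conf P Q))") auto
qed

lemma run_main:
  assumes "\<forall>Q\<in>set (prev @ rest). length Q = n"
    and "\<forall>Q\<in>set prev. \<forall>R\<in>set prev. even (card (conf Q R))"
  shows "(run prev rest (dictOf prev) (int (length prev)) = AllCommute \<longleftrightarrow>
            (\<forall>Q\<in>set (prev @ rest). \<forall>R\<in>set (prev @ rest). even (card (conf Q R)))) \<and>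
         (\<forall>j i. run prev rest (dictOf prev) (int (length prev)) = Found j i \<longrightarrow>
            1 \<le> j \<and> j < i \<and> i \<le> length (prev @ rest) \<and>
            odd (card (conf ((prev @ rest) ! (j - 1)) ((prev @ rest) ! (i - 1)))))"
  using assms
proof (induction rest arbitrary: prev)
  case Nil then show ?case by simp
next
  case (Cons P rest)
  have lenP: "length P = n" using Cons.prems by simp
  have Z: "Zval (dictOf prev) P = (\<Sum>Q\<leftarrow>prev. (-1) ^ card (conf P Q))"
    using Cons.prems lenP by (intro Zval_dictOf) auto
  let ?c = "real_of_int (int (length prev) - Zval (dictOf prev) P) / 2"
  have hp: "(real_of_int x / 2 > 0) = (x > 0)" for x :: int by simp
  have cpos: "?c > 0 \<longleftrightarrow> (\<exists>Q\<in>set prev. odd (card (conf P Q)))"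
    unfolding hp using count_pos[of prev P] Z by simp
  let ?xs = "[1..<length prev + 1]"
  let ?pr = "\<lambda>j. odd (card (conf (prev ! (j - 1)) P))"
  have runeq: "run prev (P # rest) (dictOf prev) (int (length prev)) =
     (if ?c > 0 then (case find ?pr ?xs of Some j \<Rightarrow> Found j (length prev + 1) | None \<Rightarrow> ScanFailed)
      else run (prev @ [P]) rest (dictOf (prev @ [P])) (int (length prev) + 1))"
    unfolding run.simps Let_def dict_upd by (rule refl)
  show ?case
  proof (cases "\<exists>Q\<in>set prev. odd (card (conf P Q))")
    case True
    then obtain Q where Q: "Q \<in> set prev" "odd (card (conf Q P))" using conf_sym by metis
    have notall: "\<not> (\<forall>Q\<in>set (prev @ P # rest). \<forall>R\<in>set (prev @ P # rest). even (card (conf Q R)))"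
      using Q by auto
    have r: "run prev (P # rest) (dictOf prev) (int (length prev)) =
       (case find ?pr ?xs of Some j \<Rightarrow> Found j (length prev + 1) | None \<Rightarrow> ScanFailed)"
      using runeq True cpos by simp
    have found: "1 \<le> j \<and> j < i \<and> i \<le> length (prev @ P # rest) \<and>
            odd (card (conf ((prev @ P # rest) ! (j - 1)) ((prev @ P # rest) ! (i - 1))))"
      if h: "run prev (P # rest) (dictOf prev) (int (length prev)) = Found j i" for j i
    proof -
      have "find ?pr ?xs = Some j \<and> i = length prev + 1"
        using h r by (cases "find ?pr ?xs") auto
      then obtain k where k: "k < length prev" "?pr (?xs ! k)" "j = ?xs ! k" and i: "i = length prev + 1"
        by (auto simp: find_Some_iff simp del: upt_Suc)
      then have jk: "j = k + 1" by (simp del: upt_Suc)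
      show ?thesis using k i jk by (simp add: nth_append)
    qed
    have "run prev (P # rest) (dictOf prev) (int (length prev)) \<noteq> AllCommute"
      using r by (cases "find ?pr ?xs") auto
    then show ?thesis using notall found by blast
  next
    case False
    have r1: "run prev (P # rest) (dictOf prev) (int (length prev)) =
       run (prev @ [P]) rest (dictOf (prev @ [P])) (int (length prev) + 1)"
      using runeq False cpos by (simp del: upt_Suc)
    have r: "run prev (P # rest) (dictOf prev) (int (length prev)) =
       run (prev @ [P]) rest (dictOf (prev @ [P])) (int (length (prev @ [P])))"
    proof -
      have "int (length (prev @ [P])) = int (length prev) + 1" by simp
      then show ?thesis using r1 by (simp only:)
    qed
    have good: "\<forall>Q\<in>set (prev @ [P]). \<forall>R\<in>set (prev @ [P]). even (card (conf Q R))"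
    proof (intro ballI)
      fix Q R assume "Q \<in> set (prev @ [P])" "R \<in> set (prev @ [P])"
      then have q: "Q \<in> set prev \<or> Q = P" and r: "R \<in> set prev \<or> R = P" by auto
      have F: "\<And>X. X \<in> set prev \<Longrightarrow> even (card (conf P X))" using False by blast
      have F2: "\<And>X. X \<in> set prev \<Longrightarrow> even (card (conf X P))" using F conf_sym by metis
      show "even (card (conf Q R))"
        using q r Cons.prems(2) F F2 conf_self[of P] by auto
    qed
    have "\<forall>Q\<in>set ((prev @ [P]) @ rest). length Q = n" using Cons.prems by simp
    note IH = Cons.IH[OF this good]
    have eq: "(prev @ [P]) @ rest = prev @ P # rest" by simp
    from IH show ?thesis unfolding eq r .
  qed
qed

theorem corollary1:
  fixes Ps :: "pstring list" and n :: nat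
  assumes "\<forall>P\<in>set Ps. length P = n"
  shows "(certify Ps = AllCommute \<longleftrightarrow>
            (\<forall>j<length Ps. \<forall>i<length Ps. pauli_commute (Ps ! j) (Ps ! i)))
       \<and> (\<forall>j i. certify Ps = Found j i \<longrightarrow>
            pauli_anticommute (Ps ! (j - 1)) (Ps ! (i - 1)))"
proof -
  have d0: "(\<lambda>_. 0) = dictOf []" by (auto simp: fun_eq_iff dictOf_def)
  have c: "certify Ps = run [] Ps (dictOf []) (int (length ([]::pstring list)))"
    unfolding certify_def d0[symmetric] by simp
  have M: "(certify Ps = AllCommute \<longleftrightarrow>
            (\<forall>Q\<in>set Ps. \<forall>R\<in>set Ps. even (card (conf Q R)))) \<and>
         (\<forall>j i. certify Ps = Found j i \<longrightarrow>
            1 \<le> j \<and> j < i \<and> i \<le> length Ps \<and>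
            odd (card (conf (Ps ! (j - 1)) (Ps ! (i - 1)))))"
    using run_main[of "[]" Ps n] assms unfolding c by simp
  have e: "(\<forall>Q\<in>set Ps. \<forall>R\<in>set Ps. even (card (conf Q R))) \<longleftrightarrow>
           (\<forall>j<length Ps. \<forall>i<length Ps. pauli_commute (Ps ! j) (Ps ! i))"
  proof -
    have "(\<forall>j<length Ps. \<forall>i<length Ps. pauli_commute (Ps ! j) (Ps ! i)) \<longleftrightarrow>
          (\<forall>j<length Ps. \<forall>i<length Ps. even (card (conf (Ps ! j) (Ps ! i))))"
    proof -
      have ci: "\<And>j i. j < length Ps \<Longrightarrow> i < length Ps \<Longrightarrow>
          pauli_commute (Ps ! j) (Ps ! i) \<longleftrightarrow> even (card (conf (Ps ! j) (Ps ! i)))"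
        using assms by (intro commute_iff[of _ n]) auto
      show ?thesis by (simp add: ci)
    qed
    also have "\<dots> \<longleftrightarrow> (\<forall>Q\<in>set Ps. \<forall>R\<in>set Ps. even (card (conf Q R)))"
      by (simp add: all_set_conv_all_nth)
    finally show ?thesis by simp
  qed
  have f: "pauli_anticommute (Ps ! (j - 1)) (Ps ! (i - 1))" if h: "certify Ps = Found j i" for j i
  proof -
    have "j - 1 < length Ps" "i - 1 < length Ps" "odd (card (conf (Ps ! (j - 1)) (Ps ! (i - 1))))"
      using M h by auto
    then show ?thesis using assms by (intro anticommute_if[of _ n]) auto
  qed
  show ?thesis using M e f by blast
qed

end
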